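(* Let $n,T\ge1$, $p\ge 1$, $\omega\ge 0$, and data $\dot x^j\in\mathbb{R}^n$, $z^j\in\mathbb{R}^{N_A}$, $v^j\in\mathbb{R}^{N_B}$, $j=0,\dots,T-1$, with $p=N_A+N_B$. Define $c_j:=-\omega I_n+\dot x^j(\dot x^j)^\top$, $b_j:=-\begin{bmatrix}z^j\\ v^j\end{bmatrix}(\dot x^j)^\top\in\mathbb{R}^{p\times n}$, $a_j:=\begin{bmatrix}z^j\\ v^j\end{bmatrix}\begin{bmatrix}z^j\\ v^j\end{bmatrix}^\top\in\mathbb{R}^{p\times p}$, and $Z_0:=[z^0\ \cdots\ z^{T-1}]$, $V_0:=[v^0\ \cdots\ v^{T-1}]$. If the matrix $\begin{bmatrix}Z_0\\ V_0\end{bmatrix}\in\mathbb{R}^{p\times T}$ has full row rank, then there exist a symmetric matrix $A_{\mathrm{i}}\in\mathbb{R}^{p\times p}$, a matrix $B_{\mathrm{i}}\in\mathbb{R}^{p\times n}$ and scalars $\tau_0,\dots,\tau_{T-1}$ satisfying $$\begin{bmatrix}-I-\sum_{j=0}^{T-1}\tau_jc_j & B_{\mathrm{i}}^\top-\sum_{j=0}^{T-1}\tau_jb_j^\top & B_{\mathrm{i}}^\top\\ B_{\mathrm{i}}-\sum_{j=0}^{T-1}\tau_jb_j & A_{\mathrm{i}}-\sum_{j=0}^{T-1}\tau_ja_j & 0\\ B_{\mathrm{i}} & 0 & -A_{\mathrm{i}}\end{bmatrix}\preceq 0,\qquad A_{\mathrm{i}}\succ 0,\qquad \tau_j\ge 0\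 (j=0,\dots,T-1),$$ i.e., the optimization program "minimize $-\log\det A_{\mathrm{i}}$ subject to these constraints" is feasible.
   Context: $\succeq,\preceq$ denote the Loewner order on symmetric matrices; $I$ denotes identity matrices of appropriate size. *)

theory Defs
  imports "Jordan_Normal_Form.DL_Rank"
begin

definition outer :: "real vec \<Rightarrow> real vec \<Rightarrow> real mat" where
  "outer x y = mat_of_cols (dim_vec x) [x] * transpose_mat (mat_of_cols (dim_vec y) [y])"

definition msum :: "nat \<Rightarrow> nat \<Rightarrow> (nat \<Rightarrow> real mat) \<Rightarrow> nat \<Rightarrow> real mat" where
  "msum nr nc F T = mat nr nc (\<lambda>(i,k). \<Sum>j<T. F j $$ (i,k))"

text \<open>Horizontal concatenation [A B] of matrices with equal row counts.\<close>
definition hcat :: "real mat \<Rightarrow> real mat \<Rightarrow> real mat" where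
  "hcat A B = four_block_mat A B (0\<^sub>m 0 (dim_col A)) (0\<^sub>m 0 (dim_col B))"

definition block3 :: "real mat \<Rightarrow> real mat \<Rightarrow> real mat \<Rightarrow> real mat \<Rightarrow> real mat \<Rightarrow> real mat
    \<Rightarrow> real mat \<Rightarrow> real mat \<Rightarrow> real mat \<Rightarrow> real mat" where
  "block3 M11 M12 M13 M21 M22 M23 M31 M32 M33 =
     four_block_mat M11 (hcat M12 M13) (M21 @\<^sub>r M31) (four_block_mat M22 M23 M32 M33)"

definition neg_semidef :: "real mat \<Rightarrow> bool" where
  "neg_semidef M \<longleftrightarrow> M \<in> carrier_mat (dim_row M) (dim_row M) \<and> transpose_mat M = M \<and>
     (\<forall>x \<in> carrier_vec (dim_row M). x \<bullet> (M *\<^sub>v x) \<le> 0)"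

definition pos_def :: "real mat \<Rightarrow> bool" where
  "pos_def M \<longleftrightarrow> M \<in> carrier_mat (dim_row M) (dim_row M) \<and> transpose_mat M = M \<and>
     (\<forall>x \<in> carrier_vec (dim_row M). x \<noteq> 0\<^sub>v (dim_row M) \<longrightarrow> x \<bullet> (M *\<^sub>v x) > 0)"

end

theory Submission
  imports Defs
begin



lemma cs_sum:
  fixes a b :: "nat \<Rightarrow> real"
  shows "(\<Sum>i\<in>I. a i * b i)^2 \<le> (\<Sum>i\<in>I. (a i)^2) * (\<Sum>i\<in>I. (b i)^2)"
proof -
  have e1: "(\<Sum>i\<in>I. \<Sum>k\<in>I. (a i)^2 * (b k)^2) = (\<Sum>i\<in>I. (a i)^2) * (\<Sum>i\<in>I. (b i)^2)"
    by (simp only: sum_product)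
  have e2: "(\<Sum>i\<in>I. \<Sum>k\<in>I. (a k)^2 * (b i)^2) = (\<Sum>i\<in>I. (b i)^2) * (\<Sum>i\<in>I. (a i)^2)"
    unfolding sum_product by (intro sum.cong refl) (rule mult.commute)
  have e3: "(\<Sum>i\<in>I. \<Sum>k\<in>I. (a i * b i) * (a k * b k)) = (\<Sum>i\<in>I. a i * b i)^2"
    by (simp only: sum_product power2_eq_square)
  have "0 \<le> (\<Sum>i\<in>I. \<Sum>k\<in>I. (a i * b k - a k * b i)^2)"
    by (intro sum_nonneg) auto
  also have "\<dots> = (\<Sum>i\<in>I. \<Sum>k\<in>I. ((a i)^2 * (b k)^2 + (a k)^2 * (b i)^2) - 2 * ((a i * b i) * (a k * b k)))"
    by (intro sum.cong refl) (simp add: power2_eq_square algebra_simps)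
  also have "\<dots> = (\<Sum>i\<in>I. \<Sum>k\<in>I. (a i)^2 * (b k)^2) + (\<Sum>i\<in>I. \<Sum>k\<in>I. (a k)^2 * (b i)^2)
      - 2 * (\<Sum>i\<in>I. \<Sum>k\<in>I. (a i * b i) * (a k * b k))"
    by (simp only: sum_subtractf sum.distrib sum_distrib_left)
  finally show ?thesis unfolding e1 e2 e3
    using mult.commute[of "\<Sum>i\<in>I. (a i)^2" "\<Sum>i\<in>I. (b i)^2"] by linarith
qed

lemma sq_sum_expand:
  fixes a X :: "nat \<Rightarrow> real"
  shows "(\<Sum>i\<in>I. a i * X i)^2 = (\<Sum>i\<in>I. \<Sum>k\<in>I. X i * (a i * a k) * X k)"
  by (simp add: power2_eq_square sum_product algebra_simps)

lemma qf_expand: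
  fixes X d :: "nat \<Rightarrow> real" and g h e :: "nat \<Rightarrow> nat \<Rightarrow> real"
  assumes "finite I"
  shows "(\<Sum>i\<in>I. \<Sum>k\<in>I. X i * (- \<alpha> * (if i = k then d i else 0) +
            (\<Sum>j<T. t * g j i * g j k - t/2 * h j i * h j k - t/2 * e j i * e j k)) * X k)
   = - \<alpha> * (\<Sum>i\<in>I. d i * (X i)^2) + (\<Sum>j<T. t * (\<Sum>i\<in>I. g j i * X i)^2
         - t/2 * (\<Sum>i\<in>I. h j i * X i)^2 - t/2 * (\<Sum>i\<in>I. e j i * X i)^2)"
proof -
  have 1: "(\<Sum>i\<in>I. \<Sum>k\<in>I. X i * (- \<alpha> * (if i = k then d i else 0)) * X k) = - \<alpha> * (\<Sum>i\<in>I. d i * (X i)^2)"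
  proof -
    have "(\<Sum>i\<in>I. \<Sum>k\<in>I. X i * (- \<alpha> * (if i = k then d i else 0)) * X k)
       = (\<Sum>i\<in>I. \<Sum>k\<in>I. (if i = k then - \<alpha> * (d i * (X i)^2) else 0))"
      by (intro sum.cong refl) (auto simp: power2_eq_square)
    also have "\<dots> = (\<Sum>i\<in>I. - \<alpha> * (d i * (X i)^2))"
      using assms by (simp add: sum.delta)
    finally show ?thesis by (simp add: sum_distrib_left)
  qed
  have 2: "(\<Sum>i\<in>I. \<Sum>k\<in>I. X i * (\<Sum>j<T. t * g j i * g j k - t/2 * h j i * h j k - t/2 * e j i * e j k) * X k)
     = (\<Sum>j<T. t * (\<Sum>i\<in>I. g j i * X i)^2
         - t/2 * (\<Sum>i\<in>I. h j i * X i)^2 - t/2 * (\<Sum>i\<in>I. e j i * X i)^2)"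
  proof -
    define f where "f = (\<lambda>j i k. t * g j i * g j k - t/2 * h j i * h j k - t/2 * e j i * e j k)"
    have "(\<Sum>i\<in>I. \<Sum>k\<in>I. X i * (\<Sum>j<T. f j i k) * X k)
        = (\<Sum>i\<in>I. \<Sum>k\<in>I. \<Sum>j<T. X i * f j i k * X k)"
      by (simp only: sum_distrib_left sum_distrib_right)
    also have "\<dots> = (\<Sum>i\<in>I. \<Sum>j<T. \<Sum>k\<in>I. X i * f j i k * X k)"
      by (rule sum.cong[OF refl], rule sum.swap)
    also have "\<dots> = (\<Sum>j<T. \<Sum>i\<in>I. \<Sum>k\<in>I. X i * f j i k * X k)"
      by (rule sum.swap)
    also have "\<dots> = (\<Sum>j<T. t * (\<Sum>i\<in>I. g j i * X i)^2
         - t/2 * (\<Sum>i\<in>I. h j i * X i)^2 - t/2 * (\<Sum>i\<in>I. e j i * X i)^2)"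
    proof (rule sum.cong[OF refl])
      fix j
      have "(\<Sum>i\<in>I. \<Sum>k\<in>I. X i * f j i k * X k)
          = (\<Sum>i\<in>I. \<Sum>k\<in>I. t * (X i * (g j i * g j k) * X k) - t/2 * (X i * (h j i * h j k) * X k)
               - t/2 * (X i * (e j i * e j k) * X k))"
        unfolding f_def by (intro sum.cong refl) (simp add: algebra_simps)
      also have "\<dots> = t * (\<Sum>i\<in>I. \<Sum>k\<in>I. X i * (g j i * g j k) * X k)
          - t/2 * (\<Sum>i\<in>I. \<Sum>k\<in>I. X i * (h j i * h j k) * X k)
          - t/2 * (\<Sum>i\<in>I. \<Sum>k\<in>I. X i * (e j i * e j k) * X k)"
        by (simp only: sum_subtractf sum_distrib_left)
      finally show "(\<Sum>i\<in>I. \<Sum>k\<in>I. X i * f j i k * X k) = t * (\<Sum>i\<in>I. g j i * X i)^2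
         - t/2 * (\<Sum>i\<in>I. h j i * X i)^2 - t/2 * (\<Sum>i\<in>I. e j i * X i)^2"
        by (simp only: sq_sum_expand)
    qed
    finally show ?thesis unfolding f_def .
  qed
  have "(\<Sum>i\<in>I. \<Sum>k\<in>I. X i * (- \<alpha> * (if i = k then d i else 0) +
            (\<Sum>j<T. t * g j i * g j k - t/2 * h j i * h j k - t/2 * e j i * e j k)) * X k)
    = (\<Sum>i\<in>I. \<Sum>k\<in>I. X i * (- \<alpha> * (if i = k then d i else 0)) * X k
         + X i * (\<Sum>j<T. t * g j i * g j k - t/2 * h j i * h j k - t/2 * e j i * e j k) * X k)"
    by (intro sum.cong refl) (simp only: distrib_left distrib_right)
  also have "\<dots> = (\<Sum>i\<in>I. \<Sum>k\<in>I. X i * (- \<alpha> * (if i = k then d i else 0)) * X k)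
      + (\<Sum>i\<in>I. \<Sum>k\<in>I. X i * (\<Sum>j<T. t * g j i * g j k - t/2 * h j i * h j k - t/2 * e j i * e j k) * X k)"
    by (simp only: sum.distrib)
  finally show ?thesis unfolding 1 2 .
qed



lemma (in vec_space) full_rank_orth:
  assumes A: "A \<in> carrier_mat n nc" and r: "rank A = n" and y: "y \<in> carrier_vec n"
    and o: "\<forall>c\<in>set (cols A). y \<bullet> c = 0"
  shows "y \<bullet> y = 0"
proof -
  obtain S where S: "maximal S (\<lambda>T. T \<subseteq> set (cols A) \<and> lin_indpt T)"
    using maximal_exists[of "(\<lambda>T. T \<subseteq> set (cols A) \<and> lin_indpt T)" "card (set (cols A))" "{}"]
    by (meson List.finite_set card_mono empty_iff empty_subsetI finite_lin_indpt2 rev_finite_subset)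
  have cS: "card S = n" using rank_card_indpt[OF A S] r by simp
  have colsC: "set (cols A) \<subseteq> carrier_vec n" using cols_dim A by blast
  have SA: "S \<subseteq> set (cols A)" and li: "lin_indpt S" using S unfolding maximal_def by auto
  have SC: "S \<subseteq> carrier_vec n" using SA colsC by blast
  have fin: "finite S" using SA finite_subset by blast
  have "basis S" using dim_li_is_basis[OF fin_dim fin _ li] SC cS dim_is_n by simp
  then have spS: "span S = carrier_vec n" unfolding basis_def by simp
  have "span S \<subseteq> span (set (cols A))" using span_is_monotone[OF SA] .
  with spS y have yspan: "y \<in> span (set (cols A))" by blast
  have "y \<in> orthogonal_complement (set (cols A))"
    unfolding orthogonal_complement_def using y o by auto
  then have "y \<in> orthogonal_complement (span (set (cols A)))"
    using in_orthogonal_complement_span[OF colsC] by simp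
  then show ?thesis using yspan unfolding orthogonal_complement_def by auto
qed

lemma real_full_rank_orth:
  fixes A :: "real mat"
  assumes A: "A \<in> carrier_mat n nc" and r: "vec_space.rank n A = n" and y: "y \<in> carrier_vec n"
    and o: "\<forall>c\<in>set (cols A). y \<bullet> c = 0"
  shows "y = 0\<^sub>v n"
proof -
  have yy: "y \<bullet> y = 0" using vec_space.full_rank_orth[OF A r y o] .
  have "(\<Sum>i\<in>{0..<n}. y $ i * y $ i) = 0" using yy y unfolding scalar_prod_def by simp
  then have "\<forall>i\<in>{0..<n}. y $ i * y $ i = 0"
    by (subst sum_nonneg_eq_0_iff[symmetric]) auto
  then show ?thesis using y by (intro eq_vecI) auto
qed



lemma outer_index[simp]:
  "i < dim_vec x \<Longrightarrow> k < dim_vec y \<Longrightarrow> outer x y $$ (i,k) = x $ i * y $ k"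
  "dim_row (outer x y) = dim_vec x" "dim_col (outer x y) = dim_vec y"
  by (auto simp: outer_def scalar_prod_def mat_of_cols_index)

lemma msum_index[simp]:
  "i < nr \<Longrightarrow> k < nc \<Longrightarrow> msum nr nc F T $$ (i,k) = (\<Sum>j<T. F j $$ (i,k))"
  "dim_row (msum nr nc F T) = nr" "dim_col (msum nr nc F T) = nc"
  by (auto simp: msum_def)

lemma qf_entries:
  fixes M :: "real mat"
  assumes M: "M \<in> carrier_mat N N" and X: "X \<in> carrier_vec N"
    and F: "\<And>i k. i < N \<Longrightarrow> k < N \<Longrightarrow> M $$ (i,k) = F i k"
  shows "X \<bullet> (M *\<^sub>v X) = (\<Sum>i\<in>{0..<N}. \<Sum>k\<in>{0..<N}. X $ i * F i k * X $ k)"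
proof -
  have "X \<bullet> (M *\<^sub>v X) = (\<Sum>i\<in>{0..<N}. X $ i * (M *\<^sub>v X) $ i)"
    using M unfolding scalar_prod_def by simp
  also have "\<dots> = (\<Sum>i\<in>{0..<N}. X $ i * (\<Sum>k\<in>{0..<N}. F i k * X $ k))"
    using M X F by (intro sum.cong refl) (simp add: scalar_prod_def)
  finally show ?thesis by (simp add: sum_distrib_left mult.assoc)
qed

lemma sym_entries:
  fixes M :: "real mat"
  assumes M: "M \<in> carrier_mat N N"
    and F: "\<And>i k. i < N \<Longrightarrow> k < N \<Longrightarrow> M $$ (i,k) = F i k"
    and S: "\<And>i k. F i k = F k i"
  shows "transpose_mat M = M"
  using M F S by (intro eq_matI) auto


lemma block3_index:
  assumes "M11 \<in> carrier_mat n n" "M12 \<in> carrier_mat n p" "M13 \<in> carrier_mat n q"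
    "M21 \<in> carrier_mat p n" "M22 \<in> carrier_mat p p" "M23 \<in> carrier_mat p q"
    "M31 \<in> carrier_mat q n" "M32 \<in> carrier_mat q p" "M33 \<in> carrier_mat q q"
  shows
  "i < n \<Longrightarrow> k < n \<Longrightarrow> block3 M11 M12 M13 M21 M22 M23 M31 M32 M33 $$ (i,k) = M11 $$ (i,k)"
  "i < n \<Longrightarrow> k < p \<Longrightarrow> block3 M11 M12 M13 M21 M22 M23 M31 M32 M33 $$ (i,n+k) = M12 $$ (i,k)"
  "i < n \<Longrightarrow> k < q \<Longrightarrow> block3 M11 M12 M13 M21 M22 M23 M31 M32 M33 $$ (i,n+p+k) = M13 $$ (i,k)"
  "i < p \<Longrightarrow> k < n \<Longrightarrow> block3 M11 M12 M13 M21 M22 M23 M31 M32 M33 $$ (n+i,k) = M21 $$ (i,k)"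
  "i < p \<Longrightarrow> k < p \<Longrightarrow> block3 M11 M12 M13 M21 M22 M23 M31 M32 M33 $$ (n+i,n+k) = M22 $$ (i,k)"
  "i < p \<Longrightarrow> k < q \<Longrightarrow> block3 M11 M12 M13 M21 M22 M23 M31 M32 M33 $$ (n+i,n+p+k) = M23 $$ (i,k)"
  "i < q \<Longrightarrow> k < n \<Longrightarrow> block3 M11 M12 M13 M21 M22 M23 M31 M32 M33 $$ (n+p+i,k) = M31 $$ (i,k)"
  "i < q \<Longrightarrow> k < p \<Longrightarrow> block3 M11 M12 M13 M21 M22 M23 M31 M32 M33 $$ (n+p+i,n+k) = M32 $$ (i,k)"
  "i < q \<Longrightarrow> k < q \<Longrightarrow> block3 M11 M12 M13 M21 M22 M23 M31 M32 M33 $$ (n+p+i,n+p+k) = M33 $$ (i,k)"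
proof -
  have d: "dim_row M11 = n" "dim_col M11 = n" "dim_row M12 = n" "dim_col M12 = p"
    "dim_row M13 = n" "dim_col M13 = q" "dim_row M21 = p" "dim_col M21 = n"
    "dim_row M22 = p" "dim_col M22 = p" "dim_row M23 = p" "dim_col M23 = q"
    "dim_row M31 = q" "dim_col M31 = n" "dim_row M32 = q" "dim_col M32 = p"
    "dim_row M33 = q" "dim_col M33 = q" using assms by auto
  show "i < n \<Longrightarrow> k < n \<Longrightarrow> block3 M11 M12 M13 M21 M22 M23 M31 M32 M33 $$ (i,k) = M11 $$ (i,k)"
    unfolding block3_def hcat_def append_rows_def by (simp add: d)
  show "i < n \<Longrightarrow> k < p \<Longrightarrow> block3 M11 M12 M13 M21 M22 M23 M31 M32 M33 $$ (i,n+k) = M12 $$ (i,k)"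
    unfolding block3_def hcat_def append_rows_def by (simp add: d)
  show "i < n \<Longrightarrow> k < q \<Longrightarrow> block3 M11 M12 M13 M21 M22 M23 M31 M32 M33 $$ (i,n+p+k) = M13 $$ (i,k)"
    unfolding block3_def hcat_def append_rows_def by (simp add: d)
  show "i < p \<Longrightarrow> k < n \<Longrightarrow> block3 M11 M12 M13 M21 M22 M23 M31 M32 M33 $$ (n+i,k) = M21 $$ (i,k)"
    unfolding block3_def hcat_def append_rows_def by (simp add: d)
  show "i < p \<Longrightarrow> k < p \<Longrightarrow> block3 M11 M12 M13 M21 M22 M23 M31 M32 M33 $$ (n+i,n+k) = M22 $$ (i,k)"
    unfolding block3_def hcat_def append_rows_def by (simp add: d)
  show "i < p \<Longrightarrow> k < q \<Longrightarrow> block3 M11 M12 M13 M21 M22 M23 M31 M32 M33 $$ (n+i,n+p+k) = M23 $$ (i,k)"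
    unfolding block3_def hcat_def append_rows_def by (simp add: d)
  show "i < q \<Longrightarrow> k < n \<Longrightarrow> block3 M11 M12 M13 M21 M22 M23 M31 M32 M33 $$ (n+p+i,k) = M31 $$ (i,k)"
    unfolding block3_def hcat_def append_rows_def by (simp add: d)
  show "i < q \<Longrightarrow> k < p \<Longrightarrow> block3 M11 M12 M13 M21 M22 M23 M31 M32 M33 $$ (n+p+i,n+k) = M32 $$ (i,k)"
    unfolding block3_def hcat_def append_rows_def by (simp add: d)
  show "i < q \<Longrightarrow> k < q \<Longrightarrow> block3 M11 M12 M13 M21 M22 M23 M31 M32 M33 $$ (n+p+i,n+p+k) = M33 $$ (i,k)"
    unfolding block3_def hcat_def append_rows_def by (simp add: d)
qed

lemma block3_carrier:
  assumes "M11 \<in> carrier_mat n n" "M12 \<in> carrier_mat n p" "M13 \<in> carrier_mat n q"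
    "M21 \<in> carrier_mat p n" "M22 \<in> carrier_mat p p" "M23 \<in> carrier_mat p q"
    "M31 \<in> carrier_mat q n" "M32 \<in> carrier_mat q p" "M33 \<in> carrier_mat q q"
  shows "block3 M11 M12 M13 M21 M22 M23 M31 M32 M33 \<in> carrier_mat (n+p+q) (n+p+q)"
proof -
  have d: "dim_row M11 = n" "dim_col M11 = n" "dim_row M12 = n" "dim_col M12 = p"
    "dim_row M13 = n" "dim_col M13 = q" "dim_row M21 = p" "dim_col M21 = n"
    "dim_row M22 = p" "dim_col M22 = p" "dim_row M23 = p" "dim_col M23 = q"
    "dim_row M31 = q" "dim_col M31 = n" "dim_row M32 = q" "dim_col M32 = p"
    "dim_row M33 = q" "dim_col M33 = q" using assms(1-9) by auto
  show ?thesis unfolding block3_def hcat_def append_rows_def carrier_mat_def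
    by (simp add: d)
qed

lemma three_cases:
  fixes i n p q :: nat
  assumes "i < n + p + q"
  obtains "i < n" | i' where "i = n + i'" "i' < p" | i' where "i = n + p + i'" "i' < q"
proof -
  consider "i < n" | "n \<le> i" "i < n + p" | "n + p \<le> i" using assms by (meson not_less)
  then show ?thesis
  proof cases
    case 1 then show ?thesis using that(1) by blast
  next
    case 2 then show ?thesis using that(2)[of "i - n"] by simp
  next
    case 3 then show ?thesis using that(3)[of "i - n - p"] assms by simp
  qed
qed



theorem mainTheorem2:
  fixes n T NA NB p :: nat and \<omega> :: real
    and xd z v :: "nat \<Rightarrow> real vec"
  assumes "n \<ge> 1" and "T \<ge> 1" and "p \<ge> 1" and "\<omega> \<ge> 0"
    and "p = NA + NB"
    and "\<And>j. j < T \<Longrightarrow> xd j \<in> carrier_vec n"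
    and "\<And>j. j < T \<Longrightarrow> z j \<in> carrier_vec NA"
    and "\<And>j. j < T \<Longrightarrow> v j \<in> carrier_vec NB"
    and "vec_space.rank p (mat_of_cols NA (map z [0..<T]) @\<^sub>r mat_of_cols NB (map v [0..<T])) = p"
  shows "\<exists>Ai Bi (\<tau> :: nat \<Rightarrow> real).
     Ai \<in> carrier_mat p p \<and> transpose_mat Ai = Ai \<and> Bi \<in> carrier_mat p n \<and>
     (let c = (\<lambda>j. - (\<omega> \<cdot>\<^sub>m 1\<^sub>m n) + outer (xd j) (xd j));
          b = (\<lambda>j. - outer (z j @\<^sub>v v j) (xd j));
          a = (\<lambda>j. outer (z j @\<^sub>v v j) (z j @\<^sub>v v j))
      in neg_semidef
           (block3
              (- 1\<^sub>m n - msum n n (\<lambda>j. \<tau> j \<cdot>\<^sub>m c j) T)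
              (transpose_mat Bi - msum n p (\<lambda>j. \<tau> j \<cdot>\<^sub>m transpose_mat (b j)) T)
              (transpose_mat Bi)
              (Bi - msum p n (\<lambda>j. \<tau> j \<cdot>\<^sub>m b j) T)
              (Ai - msum p p (\<lambda>j. \<tau> j \<cdot>\<^sub>m a j) T)
              (0\<^sub>m p p)
              Bi
              (0\<^sub>m p p)
              (- Ai))) \<and>
     pos_def Ai \<and> (\<forall>j < T. \<tau> j \<ge> 0)"
proof -
  define w where "w = (\<lambda>j. z j @\<^sub>v v j)"
  have wz: "\<And>j. z j @\<^sub>v v j = w j" by (simp add: w_def)
  have wdim[simp]: "\<And>j. j < T \<Longrightarrow> dim_vec (w j) = p"
  proof -
    fix j assume j: "j < T"
    have "dim_vec (z j) = NA" "dim_vec (v j) = NB" using assms(7,8)[OF j] by auto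
    then show "dim_vec (w j) = p" using assms(5) by (simp add: w_def)
  qed
  have zdim[simp]: "\<And>j. j < T \<Longrightarrow> dim_vec (z j) = NA" using assms(7) by auto
  have vdim[simp]: "\<And>j. j < T \<Longrightarrow> dim_vec (v j) = NB" using assms(8) by auto
  have xdim[simp]: "\<And>j. j < T \<Longrightarrow> dim_vec (xd j) = n" using assms(6) by auto
  have nz: "\<exists>j<T. (\<Sum>i\<in>{0..<p}. w j $ i * y $ i) \<noteq> 0" if y: "y \<in> carrier_vec p" "y \<noteq> 0\<^sub>v p" for y
  proof (rule ccontr)
    assume "\<not> ?thesis"
    then have all0: "\<And>j. j < T \<Longrightarrow> (\<Sum>i\<in>{0..<p}. w j $ i * y $ i) = 0" by auto
    let ?M = "mat_of_cols NA (map z [0..<T]) @\<^sub>r mat_of_cols NB (map v [0..<T])"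
    have MC: "?M \<in> carrier_mat p T" unfolding assms(5)
      by (rule carrier_append_rows; metis mat_of_cols_carrier(1) length_map length_upt diff_zero)
    have colM: "col ?M j = w j" if j: "j < T" for j
    proof (rule eq_vecI)
      show "dim_vec (col ?M j) = dim_vec (w j)" using MC j by simp
      fix i assume "i < dim_vec (w j)"
      then have i: "i < NA + NB" using j assms(5) by simp
      show "col ?M j $ i = w j $ i"
        using i j MC assms(5,7,8)
        by (simp add: append_rows_def mat_of_cols_index w_def)
    qed
    have "\<forall>c\<in>set (cols ?M). y \<bullet> c = 0"
    proof
      fix c assume "c \<in> set (cols ?M)"
      then obtain j where j: "j < T" and c: "c = col ?M j"
        using MC by (metis carrier_matD(2) cols_length cols_nth in_set_conv_nth)
      show "y \<bullet> c = 0" using all0[OF j] j unfolding c colM[OF j] scalar_prod_def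
        by (simp add: mult.commute)
    qed
    then have "y = 0\<^sub>v p" using real_full_rank_orth[OF MC assms(9) y(1)] by blast
    with y(2) show False by simp
  qed
  define N where "N = n + p + p"
  define g where "g = (\<lambda>j i. if i < n then xd j $ i else (0::real))"
  define h where "h = (\<lambda>j i. if i < n then -2 * xd j $ i else if i < n + p then w j $ (i - n) else (0::real))"
  define e where "e = (\<lambda>j i. if i < n + p then 0 else w j $ (i - n - p))"
  define d where "d = (\<lambda>i::nat. if i < n then 1 else (0::real))"
  define K where "K = (\<Sum>j<T. \<Sum>i\<in>{0..<N}. (g j i)^2)"
  have K0: "K \<ge> 0" unfolding K_def by (intro sum_nonneg) auto
  define t where "t = 1 / (1 + \<omega> * T + K)"
  have den: "1 + \<omega> * T + K > 0" using K0 assms(4) by (simp add: add_pos_nonneg)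
  have t0: "t > 0" unfolding t_def using den by simp
  have tK: "1 - \<omega> * T * t - t * K = t" unfolding t_def using den by (simp add: field_simps)
  define \<alpha> where "\<alpha> = 1 - \<omega> * T * t"
  define F where "F = (\<lambda>i k. - \<alpha> * (if i = k then d i else 0) +
            (\<Sum>j<T. t * g j i * g j k - t/2 * h j i * h j k - t/2 * e j i * e j k))"
  define Ai where "Ai = mat p p (\<lambda>(i,k). t/2 * (\<Sum>j<T. w j $ i * w j $ k))"
  define Bi where "Bi = (0\<^sub>m p n :: real mat)"
  have key: "neg_semidef Mb" if MbC: "Mb \<in> carrier_mat N N"
      and MbF: "\<And>i k. i < N \<Longrightarrow> k < N \<Longrightarrow> Mb $$ (i,k) = F i k" for Mb
  proof -
    have symF: "\<And>i k. F i k = F k i" unfolding F_def by (auto simp: mult.commute mult.left_commute)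
    have "X \<bullet> (Mb *\<^sub>v X) \<le> 0" if X: "X \<in> carrier_vec N" for X
    proof -
      define Y where "Y = (\<lambda>i. X $ i)"
      define S where "S = (\<Sum>i\<in>{0..<N}. d i * (Y i)^2)"
      have S0: "S \<ge> 0" unfolding S_def d_def by (intro sum_nonneg) auto
      have "X \<bullet> (Mb *\<^sub>v X) = (\<Sum>i\<in>{0..<N}. \<Sum>k\<in>{0..<N}. Y i * F i k * Y k)"
        unfolding Y_def by (rule qf_entries[OF MbC X MbF])
      also have "\<dots> = - \<alpha> * S + (\<Sum>j<T. t * (\<Sum>i\<in>{0..<N}. g j i * Y i)^2
         - t/2 * (\<Sum>i\<in>{0..<N}. h j i * Y i)^2 - t/2 * (\<Sum>i\<in>{0..<N}. e j i * Y i)^2)"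
        unfolding F_def S_def by (rule qf_expand) simp
      also have "\<dots> \<le> - \<alpha> * S + (\<Sum>j<T. t * ((\<Sum>i\<in>{0..<N}. (g j i)^2) * S))"
      proof -
        have "t * (\<Sum>i\<in>{0..<N}. g j i * Y i)^2
         - t/2 * (\<Sum>i\<in>{0..<N}. h j i * Y i)^2 - t/2 * (\<Sum>i\<in>{0..<N}. e j i * Y i)^2
          \<le> t * ((\<Sum>i\<in>{0..<N}. (g j i)^2) * S)" for j
        proof -
          have "(\<Sum>i\<in>{0..<N}. g j i * Y i) = (\<Sum>i\<in>{0..<N}. g j i * (d i * Y i))"
            by (intro sum.cong refl) (simp add: g_def d_def)
          then have "(\<Sum>i\<in>{0..<N}. g j i * Y i)^2 \<le> (\<Sum>i\<in>{0..<N}. (g j i)^2) * (\<Sum>i\<in>{0..<N}. (d i * Y i)^2)"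
            using cs_sum[where I="{0..<N}" and a="g j" and b="\<lambda>i. d i * Y i"] by simp
          also have "(\<Sum>i\<in>{0..<N}. (d i * Y i)^2) = S"
            unfolding S_def by (intro sum.cong refl) (simp add: d_def)
          finally have "t * (\<Sum>i\<in>{0..<N}. g j i * Y i)^2 \<le> t * ((\<Sum>i\<in>{0..<N}. (g j i)^2) * S)"
            using t0 by (simp add: mult_left_mono)
          moreover have "t/2 * (\<Sum>i\<in>{0..<N}. h j i * Y i)^2 \<ge> 0" "t/2 * (\<Sum>i\<in>{0..<N}. e j i * Y i)^2 \<ge> 0"
            using t0 by simp_all
          ultimately show ?thesis by linarith
        qed
        then show ?thesis by (intro add_left_mono sum_mono) auto
      qed
      also have "\<dots> = - (1 - \<omega> * T * t - t * K) * S"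
        unfolding K_def \<alpha>_def by (simp add: sum_distrib_left sum_distrib_right algebra_simps)
      also have "\<dots> = - t * S" using tK by simp
      also have "\<dots> \<le> 0" using t0 S0 by simp
      finally show ?thesis .
    qed
    then show ?thesis unfolding neg_semidef_def
      using MbC sym_entries[OF MbC MbF symF] by auto
  qed
    have AiC: "Ai \<in> carrier_mat p p" unfolding Ai_def by simp
    have AiT: "transpose_mat Ai = Ai" unfolding Ai_def by (intro eq_matI) (auto simp: mult.commute)
    have BiC: "Bi \<in> carrier_mat p n" unfolding Bi_def by simp
    have PD: "pos_def Ai"
    proof -
      define tt where "tt = - t"
      define Fp where "Fp = (\<lambda>i k. - (0::real) * (if i = k then (0::real) else 0) +
            (\<Sum>j<T. tt * (0::real) * 0 - tt/2 * w j $ i * w j $ k - tt/2 * (0::real) * 0))"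
      have "y \<bullet> (Ai *\<^sub>v y) > 0" if y: "y \<in> carrier_vec p" "y \<noteq> 0\<^sub>v p" for y
      proof -
        have "y \<bullet> (Ai *\<^sub>v y) = (\<Sum>i\<in>{0..<p}. \<Sum>k\<in>{0..<p}. y $ i * Fp i k * y $ k)"
          by (rule qf_entries[OF AiC y(1)]) (simp add: Ai_def Fp_def tt_def sum_distrib_left mult.assoc)
        also have "\<dots> = - 0 * (\<Sum>i\<in>{0..<p}. 0 * (y $ i)^2) + (\<Sum>j<T. tt * (\<Sum>i\<in>{0..<p}. 0 * y $ i)^2
         - tt/2 * (\<Sum>i\<in>{0..<p}. w j $ i * y $ i)^2 - tt/2 * (\<Sum>i\<in>{0..<p}. 0 * y $ i)^2)"
          unfolding Fp_def by (rule qf_expand[where h="\<lambda>j i. w j $ i" and g="\<lambda>j i. 0" and e="\<lambda>j i. 0" and d="\<lambda>i. 0"]) simp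
        also have "\<dots> = (\<Sum>j<T. t/2 * (\<Sum>i\<in>{0..<p}. w j $ i * y $ i)^2)"
          by (simp add: tt_def)
        also have "\<dots> > 0"
        proof -
          obtain j0 where j0: "j0 < T" "(\<Sum>i\<in>{0..<p}. w j0 $ i * y $ i) \<noteq> 0" using nz[OF y] by blast
          show ?thesis
            by (rule sum_pos2[where i=j0]) (use j0 t0 in auto)
        qed
        finally show ?thesis .
      qed
      then show ?thesis unfolding pos_def_def using AiC AiT by auto
    qed
    define C where "C j = - (\<omega> \<cdot>\<^sub>m 1\<^sub>m n) + outer (xd j) (xd j)" for j
    define Bm where "Bm j = - outer (w j) (xd j)" for j
    define Am where "Am j = outer (w j) (w j)" for j
    define M11 where "M11 = - 1\<^sub>m n - msum n n (\<lambda>j. t \<cdot>\<^sub>m C j) T"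
    define M12 where "M12 = transpose_mat Bi - msum n p (\<lambda>j. t \<cdot>\<^sub>m transpose_mat (Bm j)) T"
    define M21 where "M21 = Bi - msum p n (\<lambda>j. t \<cdot>\<^sub>m Bm j) T"
    define M22 where "M22 = Ai - msum p p (\<lambda>j. t \<cdot>\<^sub>m Am j) T"
    have c11: "M11 \<in> carrier_mat n n" unfolding M11_def by auto
    have c12: "M12 \<in> carrier_mat n p" unfolding M12_def Bi_def by auto
    have c13: "transpose_mat Bi \<in> carrier_mat n p" unfolding Bi_def by auto
    have c21: "M21 \<in> carrier_mat p n" unfolding M21_def Bi_def by auto
    have c22: "M22 \<in> carrier_mat p p" unfolding M22_def Ai_def by auto
    have c0: "0\<^sub>m p p \<in> carrier_mat p p" by auto
    have c31: "Bi \<in> carrier_mat p n" unfolding Bi_def by auto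
    have c33: "- Ai \<in> carrier_mat p p" unfolding Ai_def by auto
    note BI = block3_index[OF c11 c12 c13 c21 c22 c0 c31 c0 c33]
    have Cij: "C j $$ (i,k) = - (\<omega> * (if i = k then 1 else 0)) + xd j $ i * xd j $ k"
      if "j < T" "i < n" "k < n" for j i k
      unfolding C_def using that by simp
    have Cdim: "dim_row (C j) = n" "dim_col (C j) = n" if "j < T" for j
      unfolding C_def using that by simp_all
    have Bij: "Bm j $$ (i,k) = - (w j $ i * xd j $ k)" "dim_row (Bm j) = p" "dim_col (Bm j) = n"
      if "j < T" "i < p" "k < n" for j i k
      unfolding Bm_def using that by simp_all
    have Aij: "Am j $$ (i,k) = w j $ i * w j $ k" "dim_row (Am j) = p" "dim_col (Am j) = p"
      if "j < T" "i < p" "k < p" for j i k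
      unfolding Am_def using that by simp_all
    have Fg: "F i k = - \<alpha> * (if i = k then d i else 0) +
            (\<Sum>j<T. t * g j i * g j k - t/2 * h j i * h j k - t/2 * e j i * e j k)" for i k
      unfolding F_def ..
    have E11: "M11 $$ (i,k) = F i k" if i: "i < n" and k: "k < n" for i k
    proof -
      have "M11 $$ (i,k) = - (if i = k then 1 else 0) - (\<Sum>j<T. t * (- (\<omega> * (if i = k then 1 else 0)) + xd j $ i * xd j $ k))"
        unfolding M11_def using i k by (simp add: Cij Cdim)
      also have "\<dots> = - (1 - \<omega> * T * t) * (if i = k then 1 else 0) - t * (\<Sum>j<T. xd j $ i * xd j $ k)"
        by (cases "i = k") (simp_all add: sum.distrib sum_subtractf sum_distrib_left algebra_simps)
      also have "\<dots> = F i k"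
      proof -
        have "(\<Sum>j<T. t * g j i * g j k - t/2 * h j i * h j k - t/2 * e j i * e j k) = (\<Sum>j<T. - t * (xd j $ i * xd j $ k))"
          using i k by (intro sum.cong refl) (simp add: g_def h_def e_def algebra_simps)
        then show ?thesis unfolding Fg \<alpha>_def d_def using i k by (simp add: sum_distrib_left sum_negf)
      qed
      finally show ?thesis .
    qed
    have E12: "M12 $$ (i,k) = F i (n+k)" if i: "i < n" and k: "k < p" for i k
    proof -
      have "M12 $$ (i,k) = - (\<Sum>j<T. t * (- (w j $ k * xd j $ i)))"
        unfolding M12_def Bi_def using i k by (simp add: Bij)
      also have "\<dots> = F i (n+k)"
      proof -
        have "(\<Sum>j<T. t * g j i * g j (n+k) - t/2 * h j i * h j (n+k) - t/2 * e j i * e j (n+k)) = (\<Sum>j<T. t * (w j $ k * xd j $ i))"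
          using i k by (intro sum.cong refl) (simp add: g_def h_def e_def algebra_simps)
        then show ?thesis unfolding Fg using i k by (simp add: sum_negf)
      qed
      finally show ?thesis .
    qed
    have E13: "transpose_mat Bi $$ (i,k) = F i (n+p+k)" if i: "i < n" and k: "k < p" for i k
    proof -
      have "(\<Sum>j<T. t * g j i * g j (n+p+k) - t/2 * h j i * h j (n+p+k) - t/2 * e j i * e j (n+p+k)) = 0"
        using i k by (intro sum.neutral) (simp add: g_def h_def e_def)
      then show ?thesis unfolding Fg Bi_def using i k by simp
    qed
    have E21: "M21 $$ (i,k) = F (n+i) k" if i: "i < p" and k: "k < n" for i k
    proof -
      have "M21 $$ (i,k) = - (\<Sum>j<T. t * (- (w j $ i * xd j $ k)))"
        unfolding M21_def Bi_def using i k by (simp add: Bij)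
      also have "\<dots> = F (n+i) k"
      proof -
        have "(\<Sum>j<T. t * g j (n+i) * g j k - t/2 * h j (n+i) * h j k - t/2 * e j (n+i) * e j k) = (\<Sum>j<T. t * (w j $ i * xd j $ k))"
          using i k by (intro sum.cong refl) (simp add: g_def h_def e_def algebra_simps)
        then show ?thesis unfolding Fg using i k by (simp add: sum_negf)
      qed
      finally show ?thesis .
    qed
    have E22: "M22 $$ (i,k) = F (n+i) (n+k)" if i: "i < p" and k: "k < p" for i k
    proof -
      have "M22 $$ (i,k) = t/2 * (\<Sum>j<T. w j $ i * w j $ k) - (\<Sum>j<T. t * (w j $ i * w j $ k))"
        unfolding M22_def Ai_def using i k by (simp add: Aij)
      also have "\<dots> = F (n+i) (n+k)"
      proof -
        have "(\<Sum>j<T. t * g j (n+i) * g j (n+k) - t/2 * h j (n+i) * h j (n+k) - t/2 * e j (n+i) * e j (n+k)) = (\<Sum>j<T. - (t/2) * (w j $ i * w j $ k))"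
          using i k by (intro sum.cong refl) (simp add: g_def h_def e_def algebra_simps)
        moreover have "(\<Sum>j<T. - (t/2) * (w j $ i * w j $ k)) = - (t/2) * (\<Sum>j<T. w j $ i * w j $ k)"
          by (simp add: sum_distrib_left)
        moreover have "(\<Sum>j<T. t * (w j $ i * w j $ k)) = t * (\<Sum>j<T. w j $ i * w j $ k)"
          by (simp add: sum_distrib_left)
        ultimately show ?thesis unfolding Fg d_def using i k by simp
      qed
      finally show ?thesis .
    qed
    have E23: "F (n+i) (n+p+k) = 0" if i: "i < p" and k: "k < p" for i k
    proof -
      have "(\<Sum>j<T. t * g j (n+i) * g j (n+p+k) - t/2 * h j (n+i) * h j (n+p+k) - t/2 * e j (n+i) * e j (n+p+k)) = 0"
        using i k by (intro sum.neutral) (simp add: g_def h_def e_def)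
      then show ?thesis unfolding Fg using i k by simp
    qed
    have E31: "Bi $$ (i,k) = F (n+p+i) k" if i: "i < p" and k: "k < n" for i k
    proof -
      have "(\<Sum>j<T. t * g j (n+p+i) * g j k - t/2 * h j (n+p+i) * h j k - t/2 * e j (n+p+i) * e j k) = 0"
        using i k by (intro sum.neutral) (simp add: g_def h_def e_def)
      then show ?thesis unfolding Fg Bi_def using i k by simp
    qed
    have E32: "F (n+p+i) (n+k) = 0" if i: "i < p" and k: "k < p" for i k
    proof -
      have "(\<Sum>j<T. t * g j (n+p+i) * g j (n+k) - t/2 * h j (n+p+i) * h j (n+k) - t/2 * e j (n+p+i) * e j (n+k)) = 0"
        using i k by (intro sum.neutral) (simp add: g_def h_def e_def)
      then show ?thesis unfolding Fg using i k by simp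
    qed
    have E33: "(- Ai) $$ (i,k) = F (n+p+i) (n+p+k)" if i: "i < p" and k: "k < p" for i k
    proof -
      have "(\<Sum>j<T. t * g j (n+p+i) * g j (n+p+k) - t/2 * h j (n+p+i) * h j (n+p+k) - t/2 * e j (n+p+i) * e j (n+p+k))
          = (\<Sum>j<T. - (t/2) * (w j $ i * w j $ k))"
        using i k by (intro sum.cong refl) (simp add: g_def h_def e_def algebra_simps)
      moreover have "(\<Sum>j<T. - (t/2) * (w j $ i * w j $ k)) = - (t/2) * (\<Sum>j<T. w j $ i * w j $ k)"
        by (simp add: sum_distrib_left)
      ultimately show ?thesis unfolding Fg Ai_def d_def using i k by simp
    qed
    have LET': "neg_semidef (block3 M11 M12 (transpose_mat Bi) M21 M22 (0\<^sub>m p p) Bi (0\<^sub>m p p) (- Ai))"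
    proof (rule key)
      show "block3 M11 M12 (transpose_mat Bi) M21 M22 (0\<^sub>m p p) Bi (0\<^sub>m p p) (- Ai) \<in> carrier_mat N N"
        unfolding N_def by (rule block3_carrier[OF c11 c12 c13 c21 c22 c0 c31 c0 c33])
    next
      fix i k assume i: "i < N" and k: "k < N"
      show "block3 M11 M12 (transpose_mat Bi) M21 M22 (0\<^sub>m p p) Bi (0\<^sub>m p p) (- Ai) $$ (i,k) = F i k"
        using i unfolding N_def
      proof (cases rule: three_cases)
        case 1
        from k[unfolded N_def] show ?thesis
          by (cases rule: three_cases) (use 1 in \<open>simp_all add: BI E11 E12 E13\<close>)
      next
        case (2 i')
        from k[unfolded N_def] show ?thesis
          by (cases rule: three_cases) (use 2 in \<open>simp_all add: BI E21 E22 E23\<close>)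
      next
        case (3 i')
        from k[unfolded N_def] show ?thesis
          by (cases rule: three_cases) (use 3 in \<open>simp_all add: BI E31 E32 E33\<close>)
      qed
    qed
    have LET: "let c = (\<lambda>j. - (\<omega> \<cdot>\<^sub>m 1\<^sub>m n) + outer (xd j) (xd j));
          b = (\<lambda>j. - outer (z j @\<^sub>v v j) (xd j));
          a = (\<lambda>j. outer (z j @\<^sub>v v j) (z j @\<^sub>v v j))
      in neg_semidef
           (block3
              (- 1\<^sub>m n - msum n n (\<lambda>j. t \<cdot>\<^sub>m c j) T)
              (transpose_mat Bi - msum n p (\<lambda>j. t \<cdot>\<^sub>m transpose_mat (b j)) T)
              (transpose_mat Bi)
              (Bi - msum p n (\<lambda>j. t \<cdot>\<^sub>m b j) T)
              (Ai - msum p p (\<lambda>j. t \<cdot>\<^sub>m a j) T)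
              (0\<^sub>m p p)
              Bi
              (0\<^sub>m p p)
              (- Ai))"
      unfolding Let_def wz using LET' unfolding M11_def M12_def M21_def M22_def C_def Bm_def Am_def .
  show ?thesis
    apply (rule exI[of _ Ai], rule exI[of _ Bi], rule exI[of _ "\<lambda>_. t"])
    apply (intro conjI)
         apply (rule AiC)
        apply (rule AiT)
       apply (rule BiC)
      apply (rule LET)
     apply (rule PD)
    using t0 by simp
qed

end
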